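(* Let $K$ be a finite field, let $L$ be the quadratic extension of $K$, and let $d$ be an integer with $\gcd(d,|L|-1)=1$. Then $\sum_{a\in K^\times}W_{L,d}(a)=|L|$.
   Context: For a finite field $F$ of characteristic $p$, $\psi_F(x)=\exp(2\pi i\,\mathrm{Tr}_{F/\mathbb{F}_p}(x)/p)$; for $a\in L$, $W_{L,d}(a)=\sum_{x\in L}\psi_L(x^d+ax)$. *)

theory Defs
  imports "HOL-Analysis.Analysis"
begin

definition is_subfield :: "'a::field set \<Rightarrow> bool" where
  "is_subfield K \<longleftrightarrow> 0 \<in> K \<and> 1 \<in> K \<and>
     (\<forall>x\<in>K. \<forall>y\<in>K. x + y \<in> K \<and> x * y \<in> K) \<and>
     (\<forall>x\<in>K. - x \<in> K \<and> inverse x \<in> K)"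

definition ff_degree :: "'a::{field,finite} itself \<Rightarrow> nat" where
  "ff_degree _ = (THE n. CARD('a) = CHAR('a) ^ n)"

definition abs_trace :: "'a::{field,finite} \<Rightarrow> 'a" where
  "abs_trace x = (\<Sum>i<ff_degree TYPE('a). x ^ (CHAR('a) ^ i))"

text \<open>The canonical additive character psi_F(x) = exp(2 pi i Tr(x)/p), where Tr(x),
  an element of the prime field, is identified with its representative k in {0..p-1}.\<close>
definition psi :: "'a::{field,finite} \<Rightarrow> complex" where
  "psi x = exp (2 * of_real pi * \<i> *
      of_nat (THE k. k < CHAR('a) \<and> of_nat k = abs_trace x) / of_nat CHAR('a))"

text \<open>Weil sum W_{L,d}(a) = sum over x in L of psi_L(x^d + a x); x^d for integer d
  (with the Isabelle convention 0 powi d = 0).\<close>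
definition W :: "int \<Rightarrow> 'a::{field,finite} \<Rightarrow> complex" where
  "W d a = (\<Sum>x\<in>UNIV. psi (x powi d + a * x))"

end

theory Submission imports Defs "HOL-Computational_Algebra.Computational_Algebra" begin


lemma ff_char_prime: "prime CHAR('a::{field,finite})"
  using prime_CHAR_semidom[where ?'a='a] finite_imp_CHAR_pos[where ?'a='a] by simp

lemma of_int_eq_char: "(of_int a = (of_int b :: 'a::ring_1)) \<longleftrightarrow> int CHAR('a) dvd (a - b)"
  by (metis eq_iff_diff_eq_0 of_int_diff of_int_eq_0_iff_char_dvd)

definition subsp :: "'a::field set \<Rightarrow> bool" where
  "subsp H \<longleftrightarrow> 0 \<in> H \<and> (\<forall>x\<in>H. \<forall>y\<in>H. x + y \<in> H) \<and> (\<forall>c::int. \<forall>x\<in>H. of_int c * x \<in> H)"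

lemma subsp_extend:
  fixes H :: "'a::{field,finite} set"
  assumes H: "subsp H" and x: "x \<notin> H"
  defines "H' \<equiv> (\<lambda>(h,k). h + of_int k * x) ` (H \<times> {0..<int CHAR('a)})"
  shows "subsp H' \<and> card H' = CHAR('a) * card H"
proof -
  let ?p = "int CHAR('a)"
  have pp: "prime CHAR('a::{field,finite})" by (rule ff_char_prime)
  have p0: "?p > 0" using pp prime_gt_0_nat by auto
  have red: "of_int (k mod ?p) = (of_int k :: 'a)" for k
    by (subst of_int_eq_char) (simp add: mod_eq_dvd_iff[symmetric])
  have Hneg: "- h \<in> H" if "h \<in> H" for h
    using H that unfolding subsp_def by (metis mult_minus1 of_int_1 of_int_minus)
  have mem: "h + of_int k * x \<in> H'" if "h \<in> H" for h k
  proof -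
    have "h + of_int k * x = h + of_int (k mod ?p) * x" by (simp add: red)
    moreover have "(h, k mod ?p) \<in> H \<times> {0..<?p}" using that p0 by auto
    ultimately show ?thesis unfolding H'_def by (auto intro!: image_eqI[where x="(h, k mod ?p)"])
  qed
  have "subsp H'"
    unfolding subsp_def
  proof (intro conjI ballI allI)
    show "0 \<in> H'" using mem[of 0 0] H unfolding subsp_def by simp
  next
    fix u v assume "u \<in> H'" "v \<in> H'"
    then obtain h k h' k' where "h \<in> H" "h' \<in> H" "u = h + of_int k * x" "v = h' + of_int k' * x"
      unfolding H'_def by auto
    moreover have "h + h' \<in> H" using H \<open>h \<in> H\<close> \<open>h' \<in> H\<close> unfolding subsp_def by blast
    ultimately show "u + v \<in> H'" using mem[of "h + h'" "k + k'"] by (simp add: algebra_simps)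
  next
    fix c :: int and u assume "u \<in> H'"
    then obtain h k where "h \<in> H" "u = h + of_int k * x"
      unfolding H'_def by auto
    moreover have "of_int c * h \<in> H" using H \<open>h \<in> H\<close> unfolding subsp_def by blast
    ultimately show "of_int c * u \<in> H'" using mem[of "of_int c * h" "c * k"] by (simp add: algebra_simps)
  qed
  moreover have "inj_on (\<lambda>(h,k). h + of_int k * x) (H \<times> {0..<?p})"
  proof (rule inj_onI, clarsimp)
    fix h k h' k' assume hk: "h \<in> H" "h' \<in> H" "0 \<le> k" "k < ?p" "0 \<le> k'" "k' < ?p"
      and eq: "h + of_int k * x = h' + of_int k' * x"
    have kk: "k = k'"
    proof (rule ccontr)
      assume "k \<noteq> k'"
      define c where "c = k - k'"
      have "\<not> ?p dvd c"
      proof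
        assume "?p dvd c"
        then obtain m where "c = ?p * m" by blast
        moreover have "c \<noteq> 0" "\<bar>c\<bar> < ?p" using \<open>k \<noteq> k'\<close> hk unfolding c_def by auto
        ultimately show False by (cases "m = 0") (auto simp: abs_mult)
      qed
      hence "coprime c ?p" using pp
        by (metis coprime_commute prime_imp_coprime prime_nat_int_transfer)
      then obtain u v where uv: "u * c + v * ?p = 1" using bezout_int[of c ?p] by auto
      have "(of_int u * of_int c :: 'a) = 1"
      proof -
        have "(of_int (u * c + v * ?p) :: 'a) = 1" using uv by simp
        thus ?thesis by simp
      qed
      have "of_int c * x = h' - h" using eq unfolding c_def by (simp add: algebra_simps)
      hence "of_int c * x \<in> H" using H hk Hneg unfolding subsp_def by (metis diff_conv_add_uminus)
      hence "of_int u * (of_int c * x) \<in> H" using H unfolding subsp_def by blast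
      hence "x \<in> H" using \<open>(of_int u * of_int c :: 'a) = 1\<close> by (simp add: mult.assoc[symmetric])
      thus False using x by simp
    qed
    with eq show "h = h' \<and> k = k'" by simp
  qed
  hence "card H' = card (H \<times> {0..<?p})" unfolding H'_def by (rule card_image)
  hence "card H' = card H * CHAR('a)" by (simp add: card_cartesian_product)
  ultimately show ?thesis by simp
qed

lemma card_prime_power_aux:
  "subsp (H::'a::{field,finite} set) \<Longrightarrow> card H = CHAR('a) ^ j \<Longrightarrow> \<exists>N. CARD('a) = CHAR('a) ^ N"
proof (induction "CARD('a) - card H" arbitrary: j H rule: less_induct)
  case (less H j)
  show ?case
  proof (cases "H = UNIV")
    case True thus ?thesis using less by auto
  next
    case False
    then obtain x where x: "x \<notin> H" by auto
    define H' where "H' = (\<lambda>(h,k). h + of_int k * x) ` (H \<times> {0..<int CHAR('a)})"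
    have e: "subsp H' \<and> card H' = CHAR('a) * card H"
      using subsp_extend[OF less(2) x] unfolding H'_def by simp
    have "card H > 0" using less(3) ff_char_prime[where ?'a='a] prime_gt_0_nat by auto
    moreover have "CHAR('a) > 1" using ff_char_prime[where ?'a='a] prime_gt_1_nat by auto
    ultimately have "card H' > card H" using e by simp
    moreover have "card H' \<le> CARD('a)" by (rule card_mono) auto
    ultimately have "CARD('a) - card H' < CARD('a) - card H" by linarith
    thus ?thesis using less(1)[of H' "Suc j"] e less(3) by auto
  qed
qed

lemma card_prime_power: "\<exists>N. CARD('a::{field,finite}) = CHAR('a) ^ N"
proof -
  have "subsp ({0}::'a set)" unfolding subsp_def by simp
  thus ?thesis using card_prime_power_aux[of "{0::'a}" 0] by simp
qed




lemma ff_degree_eq: "CARD('a::{field,finite}) = CHAR('a) ^ ff_degree TYPE('a)"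
proof -
  obtain N where N: "CARD('a) = CHAR('a) ^ N" using card_prime_power by blast
  have g: "CHAR('a) > 1" using ff_char_prime[where ?'a='a] prime_gt_1_nat by auto
  have "(THE n. CARD('a) = CHAR('a) ^ n) = N"
    by (rule the_equality) (use N g power_inject_exp in auto)
  thus ?thesis using N unfolding ff_degree_def by simp
qed

lemma pow_card: "(x::'a::{field,finite}) ^ CARD('a) = x"
proof (cases "x = 0")
  case False
  have "x * (\<Prod>y\<in>UNIV-{0}. x * y) = x * x ^ (CARD('a) - 1) * \<Prod>(UNIV-{0})"
    by (simp add: prod.distrib mult_ac)
  also have "x * x ^ (CARD('a) - 1) = x ^ Suc (CARD('a) - 1)"
    by (subst power_Suc) auto
  also have "Suc (CARD('a) - 1) = CARD('a)"
    using finite_UNIV_card_ge_0[where ?'a = 'a] by simp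
  also have "(\<Prod>y\<in>UNIV-{0}. x * y) = (\<Prod>y\<in>UNIV-{0}. y)"
    by (rule prod.reindex_bij_witness[of _ "\<lambda>y. y / x" "\<lambda>y. x * y"]) (use False in auto)
  finally show ?thesis
    by simp
qed (use finite_UNIV_card_ge_0[where ?'a = 'a] in auto)

lemma frob_add: "((x::'a::{field,finite}) + y) ^ (CHAR('a) ^ i) = x ^ (CHAR('a) ^ i) + y ^ (CHAR('a) ^ i)"
  by (rule freshmans_dream') (auto simp: ff_char_prime)

lemma trace_add: "abs_trace ((x::'a::{field,finite}) + y) = abs_trace x + abs_trace y"
  unfolding abs_trace_def by (simp add: frob_add sum.distrib)

lemma trace_pow: "abs_trace (x::'a::{field,finite}) ^ CHAR('a) = abs_trace x"
proof -
  let ?p = "CHAR('a)" and ?N = "ff_degree TYPE('a)"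
  have "abs_trace x ^ ?p = (\<Sum>i<?N. (x ^ (?p ^ i)) ^ ?p)"
    unfolding abs_trace_def by (rule freshmans_dream_sum) (auto simp: ff_char_prime)
  also have "\<dots> = (\<Sum>i<?N. x ^ (?p ^ Suc i))"
    by (simp add: power_mult[symmetric] mult.commute)
  also have "\<dots> = (\<Sum>i<?N. x ^ (?p ^ i))"
  proof (cases ?N)
    case (Suc m)
    have "x ^ (?p ^ Suc m) = x" using pow_card[of x] ff_degree_eq[where ?'a='a] Suc by simp
    hence "(\<Sum>i<Suc m. x ^ (?p ^ Suc i)) = (\<Sum>i<Suc m. x ^ (?p ^ i))"
      unfolding sum.lessThan_Suc_shift[of "\<lambda>i. x ^ (?p ^ i)"] sum.lessThan_Suc by simp
    thus ?thesis using Suc by simp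
  qed simp
  finally show ?thesis unfolding abs_trace_def .
qed

lemma of_nat_pow_char: "(of_nat k :: 'a::{field,finite}) ^ CHAR('a) = of_nat k"
proof (induction k)
  case 0 thus ?case using ff_char_prime[where ?'a='a] by (simp add: prime_gt_0_nat)
next
  case (Suc k)
  have "(of_nat k + 1 :: 'a) ^ CHAR('a) = of_nat k ^ CHAR('a) + 1 ^ CHAR('a)"
    by (rule freshmans_dream) (auto simp: ff_char_prime)
  thus ?case using Suc by (simp add: add.commute)
qed

lemma prime_field_elem:
  assumes "(y::'a::{field,finite}) ^ CHAR('a) = y"
  shows "\<exists>!k. k < CHAR('a) \<and> of_nat k = y"
proof -
  let ?p = "CHAR('a)"
  have p2: "?p \<ge> 2" using ff_char_prime[where ?'a='a] prime_ge_2_nat by auto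
  define P where "P = (monom (1::'a) ?p - [:0, 1:])"
  have "coeff [:0::'a, 1:] ?p = 0" using p2 by (simp add: coeff_pCons split: nat.split)
  hence cP: "coeff P ?p = 1" using p2 unfolding P_def by simp
  hence P0: "P \<noteq> 0" by auto
  have dP: "degree P \<le> ?p" unfolding P_def
    using p2 by (intro degree_diff_le) (auto simp: degree_monom_le degree_pCons_eq_if)
  have roots: "{z. poly P z = 0} = {z. z ^ ?p = z}" unfolding P_def by (auto simp: poly_monom)
  have inj: "inj_on (of_nat :: nat \<Rightarrow> 'a) {..<?p}"
  proof (rule inj_onI)
    fix a b assume "a \<in> {..<?p}" "b \<in> {..<?p}" "(of_nat a :: 'a) = of_nat b"
    hence d: "int ?p dvd (int a - int b)" using of_int_eq_char[of "int a" "int b", where ?'a='a] by simp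
    have "\<bar>int a - int b\<bar> < int ?p" using \<open>a \<in> {..<?p}\<close> \<open>b \<in> {..<?p}\<close> by auto
    thus "a = b" using dvd_imp_le_int[OF _ d] by fastforce
  qed
  have sub: "of_nat ` {..<?p} \<subseteq> {z::'a. z ^ ?p = z}" by (auto simp: of_nat_pow_char)
  have "card (of_nat ` {..<?p} :: 'a set) = ?p" using inj by (simp add: card_image)
  moreover have "card {z::'a. z ^ ?p = z} \<le> ?p"
    using card_poly_roots_bound[OF P0] dP roots by simp
  ultimately have "of_nat ` {..<?p} = {z::'a. z ^ ?p = z}"
    using sub card_mono[OF _ sub] by (intro card_subset_eq) auto
  hence "\<exists>k<?p. of_nat k = y" using assms by (metis (mono_tags, lifting) imageE lessThan_iff mem_Collect_eq)
  thus ?thesis using inj by (auto simp: inj_on_def)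
qed




definition kap :: "'a::{field,finite} \<Rightarrow> nat" where
  "kap x = (THE k. k < CHAR('a) \<and> of_nat k = abs_trace x)"

lemma kap: "kap (x::'a::{field,finite}) < CHAR('a) \<and> of_nat (kap x) = abs_trace x"
  unfolding kap_def by (rule theI') (rule prime_field_elem[OF trace_pow])

definition ee :: "nat \<Rightarrow> int \<Rightarrow> complex" where
  "ee p a = exp (2 * of_real pi * \<i> * of_int a / of_nat p)"

lemma psi_ee: "psi (x::'a::{field,finite}) = ee CHAR('a) (int (kap x))"
  unfolding psi_def ee_def kap_def by simp

lemma ee_add: "ee p (a + b) = ee p a * ee p b"
  unfolding ee_def by (simp add: exp_add[symmetric] add_divide_distrib distrib_left)

lemma ee_mult_p: "p > 0 \<Longrightarrow> ee p (int p * m) = 1"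
proof -
  assume "p > 0"
  have "2 * of_real pi * \<i> * of_int (int p * m) / of_nat p = \<i> * (of_int m * (of_real pi * 2))"
    using \<open>p > 0\<close> by (simp add: field_simps)
  thus ?thesis unfolding ee_def by simp
qed

lemma ee_cong: "p > 0 \<Longrightarrow> int p dvd (a - b) \<Longrightarrow> ee p a = ee p b"
proof -
  assume "p > 0" "int p dvd (a - b)"
  then obtain m where "a = b + int p * m" by (metis add.commute diff_add_cancel dvdE)
  thus ?thesis using ee_add[of p b "int p * m"] ee_mult_p[OF \<open>p > 0\<close>] by simp
qed

lemma ee_one: "p > 0 \<Longrightarrow> ee p a = 1 \<longleftrightarrow> int p dvd a"
proof
  assume p: "p > 0"
  assume "ee p a = 1"
  then obtain n :: int where n: "Im (2 * of_real pi * \<i> * of_int a / of_nat p) = of_int (2 * n) * pi"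
    unfolding ee_def exp_eq_1 by blast
  have "Im (2 * of_real pi * \<i> * of_int a / of_nat p) = 2 * pi * a / p" by simp
  with n have "2 * pi * a / p = 2 * n * pi" by simp
  hence "real_of_int a = real_of_int (int p * n)" using p by (simp add: field_simps)
  hence "a = int p * n" by (simp only: of_int_eq_iff)
  thus "int p dvd a" by simp
next
  assume "p > 0" "int p dvd a"
  thus "ee p a = 1" using ee_mult_p by (auto elim!: dvdE)
qed

lemma char_pos': "CHAR('a::{field,finite}) > 0"
  using ff_char_prime[where ?'a='a] prime_gt_0_nat by auto

lemma psi_add: "psi ((x::'a::{field,finite}) + y) = psi x * psi y"
proof -
  have "(of_int (int (kap (x + y))) :: 'a) = of_int (int (kap x) + int (kap y))"
    using kap[of "x+y"] kap[of x] kap[of y] trace_add[of x y] by simp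
  hence "int CHAR('a) dvd (int (kap (x + y)) - (int (kap x) + int (kap y)))"
    by (simp only: of_int_eq_char)
  hence "ee CHAR('a) (int (kap (x + y))) = ee CHAR('a) (int (kap x) + int (kap y))"
    by (rule ee_cong[OF char_pos'])
  thus ?thesis by (simp add: psi_ee ee_add)
qed

lemma psi_one: "psi (x::'a::{field,finite}) = 1 \<longleftrightarrow> abs_trace x = 0"
proof -
  have "psi x = 1 \<longleftrightarrow> int CHAR('a) dvd int (kap x)" by (simp add: psi_ee ee_one[OF char_pos'])
  also have "\<dots> \<longleftrightarrow> (of_int (int (kap x)) :: 'a) = 0" by (simp only: of_int_eq_0_iff_char_dvd)
  also have "\<dots> \<longleftrightarrow> abs_trace x = 0" using kap[of x] by simp
  finally show ?thesis .
qed

lemma psi_zero: "psi (0::'a::{field,finite}) = 1"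
  using char_pos'[where ?'a='a] by (simp add: psi_one abs_trace_def power_0_left)

lemma frob_poly_nonvanish:
  fixes c :: "'a::{field,finite}" and S :: "'a set"
  assumes c: "c \<noteq> 0" and n: "n \<ge> 1" and S: "card S > CHAR('a) ^ (n - 1)"
  shows "\<exists>a\<in>S. (\<Sum>i<n. (c * a) ^ (CHAR('a) ^ i)) \<noteq> 0"
proof (rule ccontr)
  let ?p = "CHAR('a)"
  have p2: "?p \<ge> 2" using ff_char_prime[where ?'a='a] prime_ge_2_nat by auto
  assume "\<not> ?thesis"
  hence all: "\<forall>a\<in>S. (\<Sum>i<n. (c * a) ^ (?p ^ i)) = 0" by blast
  define R where "R = (\<Sum>i<n. monom (c ^ (?p ^ i)) (?p ^ i))"
  have pR: "poly R a = (\<Sum>i<n. (c * a) ^ (?p ^ i))" for a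
    unfolding R_def poly_sum by (simp add: poly_monom power_mult_distrib)
  have "coeff R 1 = (\<Sum>i<n. if ?p ^ i = 1 then c ^ (?p ^ i) else 0)"
    unfolding R_def coeff_sum by (simp add: coeff_monom)
  also have "\<dots> = (\<Sum>i<n. if i = 0 then c else 0)"
    by (rule sum.cong) (use p2 in auto)
  also have "\<dots> = c" using n by simp
  finally have "R \<noteq> 0" using c by auto
  have "degree R \<le> ?p ^ (n - 1)" unfolding R_def
  proof (rule degree_sum_le)
    fix i assume "i \<in> {..<n}"
    hence "?p ^ i \<le> ?p ^ (n - 1)" using p2 by (intro power_increasing) auto
    thus "degree (monom (c ^ (?p ^ i)) (?p ^ i)) \<le> ?p ^ (n - 1)"
      using degree_monom_le order_trans by blast
  qed simp
  moreover have "card S \<le> card {x. poly R x = 0}"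
    by (rule card_mono) (use all pR in auto)
  ultimately show False using card_poly_roots_bound[OF \<open>R \<noteq> 0\<close>] S by simp
qed

lemma trace_nonzero_exists: "\<exists>y::'a::{field,finite}. abs_trace y \<noteq> 0"
proof -
  let ?p = "CHAR('a)" and ?N = "ff_degree TYPE('a)"
  have p2: "?p \<ge> 2" using ff_char_prime[where ?'a='a] prime_ge_2_nat by auto
  have C: "CARD('a) = ?p ^ ?N" by (rule ff_degree_eq)
  have "?N \<ge> 1"
  proof (rule ccontr)
    assume "\<not> ?N \<ge> 1" hence "CARD('a) = 1" using C by simp
    moreover have "card {0::'a,1} \<le> CARD('a)" by (rule card_mono) auto
    hence "CARD('a) \<ge> 2" by simp
    ultimately show False by simp
  qed
  moreover have "card (UNIV::'a set) > ?p ^ (?N - 1)"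
  proof -
    obtain m where m: "?N = Suc m" using \<open>?N \<ge> 1\<close> by (cases ?N) auto
    have "?p ^ m > 0" using p2 by simp
    hence "?p ^ m < ?p * ?p ^ m" using p2 by simp
    thus ?thesis using C m by simp
  qed
  ultimately obtain a :: 'a where "(\<Sum>i<?N. (1 * a) ^ (?p ^ i)) \<noteq> 0"
    using frob_poly_nonvanish[of 1 ?N UNIV] by auto
  thus ?thesis unfolding abs_trace_def by auto
qed

lemma psi_sum_zero: "(\<Sum>x\<in>(UNIV::'a::{field,finite} set). psi x) = 0"
proof -
  obtain y :: 'a where y: "abs_trace y \<noteq> 0" using trace_nonzero_exists by blast
  have "bij_betw (\<lambda>x. x + y) UNIV UNIV" by (rule bij_betwI[of _ _ _ "\<lambda>x. x - y"]) auto
  hence "(\<Sum>x\<in>UNIV. psi (x + y)) = (\<Sum>x\<in>UNIV. psi (x::'a))" by (rule sum.reindex_bij_betw)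
  hence "(\<Sum>x\<in>UNIV. psi (x::'a)) = (\<Sum>x\<in>UNIV. psi (x + y))" by simp
  also have "\<dots> = psi y * (\<Sum>x\<in>UNIV. psi (x::'a))" by (simp add: psi_add sum_distrib_left mult.commute)
  finally have "(1 - psi y) * (\<Sum>x\<in>UNIV. psi (x::'a)) = 0" by (simp add: algebra_simps)
  moreover have "psi y \<noteq> 1" using y psi_one by blast
  ultimately show ?thesis by simp
qed




lemma sum_split_add: "(\<Sum>i<m+(n::nat). f i) = (\<Sum>i<m. f i) + (\<Sum>i<n. f (m + i))"
  by (induction n) (simp_all add: add.assoc)

lemma minus_pow_char: "(- (z::'a::{field,finite})) ^ (CHAR('a) ^ i) = - (z ^ (CHAR('a) ^ i))"
proof (induction i)
  case (Suc i)
  have "(- z) ^ (CHAR('a) ^ Suc i) = ((- z) ^ (CHAR('a) ^ i)) ^ CHAR('a)"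
    by (simp add: power_mult[symmetric] mult.commute)
  also have "\<dots> = - ((z ^ (CHAR('a) ^ i)) ^ CHAR('a))"
    using Suc by (simp add: minus_power_prime_CHAR ff_char_prime)
  also have "\<dots> = - (z ^ (CHAR('a) ^ Suc i))"
    by (simp add: power_mult[symmetric] mult.commute)
  finally show ?case .
qed simp

context
  fixes K :: "'a::{field,finite} set"
  assumes K: "is_subfield K" and C: "CARD('a) = card K ^ 2"
begin

lemma K0: "0 \<in> K" and K1: "1 \<in> K" and Kadd: "x \<in> K \<Longrightarrow> y \<in> K \<Longrightarrow> x + y \<in> K"
  and Kmult: "x \<in> K \<Longrightarrow> y \<in> K \<Longrightarrow> x * y \<in> K"
  and Kneg: "x \<in> K \<Longrightarrow> - x \<in> K" and Kinv: "x \<in> K \<Longrightarrow> inverse x \<in> K"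
  using K unfolding is_subfield_def by auto

lemma q_ge2: "card K \<ge> 2"
proof -
  have "card {0::'a,1} \<le> card K" by (rule card_mono) (auto simp: K0 K1)
  thus ?thesis by simp
qed

lemma q_power: "\<exists>n. card K = CHAR('a) ^ n \<and> ff_degree TYPE('a) = 2 * n"
proof -
  let ?p = "CHAR('a)" and ?N = "ff_degree TYPE('a)"
  have pp: "prime ?p" by (rule ff_char_prime)
  have "card K dvd ?p ^ ?N" using C ff_degree_eq[where ?'a='a] by (metis dvd_triv_left power2_eq_square)
  then obtain n where n: "card K = ?p ^ n" using divides_primepow_nat[OF pp] by blast
  hence "?p ^ (2 * n) = ?p ^ ?N" using C ff_degree_eq[where ?'a='a] by (simp add: power_mult mult.commute)
  hence "2 * n = ?N" using pp prime_gt_1_nat power_inject_exp by blast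
  thus ?thesis using n by auto
qed

lemma K_pow: assumes a: "a \<in> K" shows "a ^ card K = a"
proof (cases "a = 0")
  case False
  have fin: "finite (K - {0})" by simp
  have "(\<Prod>y\<in>K-{0}. a * y) = (\<Prod>y\<in>K-{0}. y)"
    by (rule prod.reindex_bij_witness[of _ "\<lambda>y. inverse a * y" "\<lambda>y. a * y"])
       (use False a in \<open>auto simp: Kmult Kinv\<close>)
  moreover have "(\<Prod>y\<in>K-{0}. a * y) = a ^ card (K - {0}) * (\<Prod>y\<in>K-{0}. y)"
    by (simp add: prod.distrib)
  moreover have "(\<Prod>y\<in>K-{0}. y) \<noteq> 0" by simp
  ultimately have "a ^ card (K - {0}) = 1" by simp
  moreover have "card (K - {0}) = card K - 1" using K0 by simp
  ultimately have "a ^ (card K - 1) = 1" by simp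
  hence "a * a ^ (card K - 1) = a" by simp
  thus ?thesis using q_ge2 by (metis Suc_diff_1 less_le_trans pos2 power_Suc)
qed (use q_ge2 in auto)

definition T :: "'a set" where "T = {x. x ^ card K = - x}"

lemma trace_T: assumes "(y::'a) ^ card K = - y" shows "abs_trace y = 0"
proof -
  obtain n where n: "card K = CHAR('a) ^ n" "ff_degree TYPE('a) = 2 * n" using q_power by blast
  have "abs_trace y = (\<Sum>i<n+n. y ^ (CHAR('a) ^ i))" unfolding abs_trace_def n(2) by (simp add: mult_2)
  also have "\<dots> = (\<Sum>i<n. y ^ (CHAR('a) ^ i)) + (\<Sum>i<n. y ^ (CHAR('a) ^ (n + i)))"
    by (rule sum_split_add)
  also have "(\<Sum>i<n. y ^ (CHAR('a) ^ (n + i))) = (\<Sum>i<n. - (y ^ (CHAR('a) ^ i)))"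
  proof (rule sum.cong)
    fix i
    have "y ^ (CHAR('a) ^ (n + i)) = (y ^ card K) ^ (CHAR('a) ^ i)" by (simp add: n power_add power_mult)
    also have "\<dots> = - (y ^ (CHAR('a) ^ i))" using assms by (simp add: minus_pow_char)
    finally show "y ^ (CHAR('a) ^ (n + i)) = - (y ^ (CHAR('a) ^ i))" .
  qed simp
  finally show ?thesis by (simp add: sum_negf)
qed

definition S :: "'a \<Rightarrow> complex" where "S x = (\<Sum>a\<in>K. psi (a * x))"

lemma S_T: assumes "x \<in> T" shows "S x = of_nat (card K)"
proof -
  have "psi (a * x) = 1" if "a \<in> K" for a
  proof -
    have "(a * x) ^ card K = - (a * x)" using assms K_pow[OF that] unfolding T_def by (simp add: power_mult_distrib)
    thus ?thesis using trace_T psi_one by blast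
  qed
  thus ?thesis unfolding S_def by simp
qed

lemma S_notT: assumes "x \<notin> T" shows "S x = 0"
proof -
  let ?p = "CHAR('a)"
  obtain n where n: "card K = ?p ^ n" "ff_degree TYPE('a) = 2 * n" using q_power by blast
  define c where "c = x + x ^ card K"
  have c0: "c \<noteq> 0" using assms unfolding T_def c_def by (auto simp: add_eq_0_iff)
  have n1: "n \<ge> 1" using n q_ge2 by (cases n) auto
  have p2: "?p \<ge> 2" using ff_char_prime[where ?'a='a] prime_ge_2_nat by auto
  have "?p ^ (n - 1) < ?p ^ n" using p2 n1 by (intro power_strict_increasing) auto
  hence "card K > ?p ^ (n - 1)" using n by simp
  then obtain a0 where a0: "a0 \<in> K" "(\<Sum>i<n. (c * a0) ^ (?p ^ i)) \<noteq> 0"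
    using frob_poly_nonvanish[OF c0 n1] by blast
  have "abs_trace (a0 * x) = (\<Sum>i<n+n. (a0 * x) ^ (?p ^ i))" unfolding abs_trace_def n(2) by (simp add: mult_2)
  also have "\<dots> = (\<Sum>i<n. (a0 * x) ^ (?p ^ i)) + (\<Sum>i<n. (a0 * x) ^ (?p ^ (n + i)))"
    by (rule sum_split_add)
  also have "\<dots> = (\<Sum>i<n. (c * a0) ^ (?p ^ i))"
  proof -
    have "(a0 * x) ^ (?p ^ i) + (a0 * x) ^ (?p ^ (n + i)) = (c * a0) ^ (?p ^ i)" for i
    proof -
      have "(a0 * x) ^ (?p ^ (n + i)) = ((a0 * x) ^ card K) ^ (?p ^ i)" by (simp add: n power_add power_mult)
      also have "\<dots> = (a0 * x ^ card K) ^ (?p ^ i)" using K_pow[OF a0(1)] by (simp add: power_mult_distrib)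
      finally have "(a0 * x) ^ (?p ^ i) + (a0 * x) ^ (?p ^ (n + i)) = (a0 * x) ^ (?p ^ i) + (a0 * x ^ card K) ^ (?p ^ i)" by simp
      also have "\<dots> = (a0 * x + a0 * x ^ card K) ^ (?p ^ i)" by (simp add: frob_add)
      also have "a0 * x + a0 * x ^ card K = c * a0" unfolding c_def by (simp add: algebra_simps)
      finally show ?thesis .
    qed
    hence "(\<Sum>i<n. (a0 * x) ^ (?p ^ i) + (a0 * x) ^ (?p ^ (n + i))) = (\<Sum>i<n. (c * a0) ^ (?p ^ i))"
      by simp
    thus ?thesis by (simp only: sum.distrib)
  qed
  finally have tr: "abs_trace (a0 * x) \<noteq> 0" using a0(2) by simp
  have Ksub: "a - a0 \<in> K" if "a \<in> K" for a
    using Kadd[OF that Kneg[OF a0(1)]] by simp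
  have "bij_betw (\<lambda>a. a + a0) K K"
    by (rule bij_betwI[of _ _ _ "\<lambda>a. a - a0"]) (use a0(1) Ksub in \<open>auto simp: Kadd\<close>)
  hence e1: "(\<Sum>a\<in>K. psi ((a + a0) * x)) = S x" unfolding S_def by (rule sum.reindex_bij_betw)
  have e2: "(\<Sum>a\<in>K. psi ((a + a0) * x)) = psi (a0 * x) * S x"
    unfolding S_def sum_distrib_left by (rule sum.cong[OF refl]) (subst distrib_right, subst psi_add, rule mult.commute)
  have eq: "S x = psi (a0 * x) * S x" using trans[OF e1[symmetric] e2] .
  have "(1 - psi (a0 * x)) * S x = S x - psi (a0 * x) * S x" by (simp add: algebra_simps)
  also have "\<dots> = 0" by (simp only: right_minus_eq eq[symmetric])
  finally have "(1 - psi (a0 * x)) * S x = 0" .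
  moreover have "psi (a0 * x) \<noteq> 1" using tr psi_one by blast
  ultimately show ?thesis by simp
qed

lemma sum_S: "(\<Sum>x\<in>UNIV. S x) = of_nat CARD('a)"
proof -
  have "(\<Sum>x\<in>UNIV. S x) = (\<Sum>a\<in>K. \<Sum>x\<in>UNIV. psi (a * x))"
    unfolding S_def by (rule sum.swap)
  also have "\<dots> = (\<Sum>a\<in>K. if a = 0 then of_nat CARD('a) else 0)"
  proof (rule sum.cong)
    fix a assume "a \<in> K"
    show "(\<Sum>x\<in>UNIV. psi (a * x)) = (if a = 0 then of_nat CARD('a) else 0)"
    proof (cases "a = 0")
      case True thus ?thesis by (simp add: psi_zero)
    next
      case False
      have "bij_betw (\<lambda>x. a * x) UNIV UNIV"
        by (rule bij_betwI[of _ _ _ "\<lambda>x. x / a"]) (use False in auto)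
      hence "(\<Sum>x\<in>UNIV. psi (a * x)) = (\<Sum>x\<in>UNIV. psi (x::'a))" by (rule sum.reindex_bij_betw)
      thus ?thesis using False psi_sum_zero by simp
    qed
  qed simp
  also have "\<dots> = of_nat CARD('a)" using K0 by simp
  finally show ?thesis .
qed

lemma card_T: "card T = card K"
proof -
  have A: "(\<Sum>x\<in>UNIV. S x) = (\<Sum>x\<in>UNIV. if x \<in> T then of_nat (card K) else 0)"
    by (rule sum.cong) (auto simp: S_T S_notT)
  also have "\<dots> = of_nat (card K) * of_nat (card T)"
    by (simp add: sum.If_cases Int_def)
  finally have A: "(\<Sum>x\<in>UNIV. S x) = of_nat (card K) * of_nat (card T)" .
  have B: "(\<Sum>x\<in>UNIV. S x) = of_nat (card K) * of_nat (card K)"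
    using sum_S C by (simp add: power2_eq_square)
  from A B have "of_nat (card K * card T) = (of_nat (card K * card K) :: complex)" by (metis of_nat_mult)
  hence "card K * card T = card K * card K" by (simp only: of_nat_eq_iff)
  moreover have "card K \<noteq> 0" using q_ge2 by linarith
  ultimately show ?thesis by (simp add: mult_left_cancel)
qed

end



context
  fixes K :: "'a::{field,finite} set" and d :: int
  assumes K: "is_subfield K" and C: "CARD('a) = card K ^ 2"
    and G: "gcd d (int CARD('a) - 1) = 1"
begin

lemma CARD_ge4: "CARD('a) \<ge> 4"
proof -
  have "card K \<ge> 2" by (rule q_ge2[OF K C])
  hence "card K * card K \<ge> 2 * 2" by (intro mult_mono) auto
  thus ?thesis using C by (simp add: power2_eq_square)
qed

lemma d_nz: "d \<noteq> 0"
proof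
  assume "d = 0"
  hence "int CARD('a) - 1 = 1" using G CARD_ge4 by simp
  thus False using CARD_ge4 by simp
qed

lemma powi_inv: obtains u where "\<And>x::'a. x \<noteq> 0 \<Longrightarrow> (x powi d) powi u = x"
proof -
  obtain u v where uv: "u * d + v * (int CARD('a) - 1) = 1" using bezout_int[of d "int CARD('a) - 1"] G by auto
  have "(x powi d) powi u = x" if x: "x \<noteq> 0" for x :: 'a
  proof -
    obtain m where m: "CARD('a) = Suc m" using CARD_ge4 by (cases "CARD('a)") auto
    have "x * x ^ (CARD('a) - 1) = x * 1" using pow_card[of x] unfolding m by simp
    hence M: "x ^ (CARD('a) - 1) = 1" using x by simp
    have M': "x powi (int CARD('a) - 1) = 1"
    proof -
      have e: "int CARD('a) - 1 = int (CARD('a) - 1)" using CARD_ge4 by simp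
      show ?thesis by (subst e) (simp only: power_int_of_nat M)
    qed
    have "x = x powi (u * d + v * (int CARD('a) - 1))" by (simp only: uv power_int_1_right)
    also have "\<dots> = x powi (u * d) * x powi (v * (int CARD('a) - 1))"
      by (rule power_int_add) (use x in simp)
    also have "x powi (u * d) = (x powi d) powi u" by (simp only: mult.commute[of u] power_int_mult)
    also have "x powi (v * (int CARD('a) - 1)) = 1"
      by (simp only: mult.commute[of v] power_int_mult M' power_int_1_left)
    finally have "x = (x powi d) powi u * 1" .
    thus ?thesis by (metis mult_1_right)
  qed
  thus ?thesis using that by blast
qed

lemma powi_inj: "inj (\<lambda>x::'a. x powi d)"
proof (rule injI)
  obtain u where u: "\<And>x::'a. x \<noteq> 0 \<Longrightarrow> (x powi d) powi u = x" using powi_inv by blast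
  have z: "(z::'a) powi d = 0 \<longleftrightarrow> z = 0" for z using d_nz by simp
  fix x y :: 'a assume e: "x powi d = y powi d"
  show "x = y"
  proof (cases "x = 0 \<or> y = 0")
    case True thus ?thesis using e z by metis
  next
    case False
    hence "x = (x powi d) powi u" "y = (y powi d) powi u" using u by metis+
    thus ?thesis using e by metis
  qed
qed

lemma sum_psi_powi: "(\<Sum>x\<in>UNIV. psi ((x::'a) powi d)) = 0"
proof -
  have "surj (\<lambda>x::'a. x powi d)" by (rule finite_UNIV_inj_surj[OF _ powi_inj]) simp
  hence "bij (\<lambda>x::'a. x powi d)" using powi_inj by (simp only: bij_def)
  hence "(\<Sum>x\<in>UNIV. psi ((x::'a) powi d)) = (\<Sum>x\<in>UNIV. psi (x::'a))" by (rule sum.reindex_bij_betw)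
  thus ?thesis using psi_sum_zero by simp
qed

lemma T_powi: assumes "x \<in> T K" shows "x powi d \<in> T K"
proof -
  let ?q = "card K"
  have xq: "x ^ ?q = - x" using assms unfolding T_def[OF K C] by simp
  have "(x powi d) ^ ?q = x powi (d * int ?q)" by (simp add: power_int_mult)
  also have "\<dots> = (x ^ ?q) powi d" by (simp only: mult.commute[of d] power_int_mult power_int_of_nat)
  also have "\<dots> = (- x) powi d" using xq by simp
  also have "\<dots> = - (x powi d)"
  proof (cases "CHAR('a) = 2")
    case True thus ?thesis using uminus_CHAR_2 by metis
  next
    case False
    have "CHAR('a) \<ge> 2" using ff_char_prime[where ?'a='a] prime_ge_2_nat by auto
    hence "odd CHAR('a)" using ff_char_prime[where ?'a='a] False prime_odd_nat by force
    hence "odd (CHAR('a) ^ ff_degree TYPE('a))" by simp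
    hence "odd CARD('a)" using ff_degree_eq[where ?'a='a] by simp
    hence "even (int CARD('a) - 1)" by simp
    have "odd d"
    proof
      assume "even d"
      hence "2 dvd gcd d (int CARD('a) - 1)" using \<open>even (int CARD('a) - 1)\<close> by simp
      thus False using G by simp
    qed
    thus ?thesis by simp
  qed
  finally show ?thesis unfolding T_def[OF K C] by simp
qed

lemma final: "(\<Sum>a\<in>K - {0}. W d a) = of_nat CARD('a)"
proof -
  have K0: "0 \<in> K" by (rule K0[OF K C])
  have "(\<Sum>a\<in>K - {0}. W d a) = (\<Sum>a\<in>K - {0}. \<Sum>x\<in>UNIV. psi (x powi d) * psi (a * x))"
    unfolding W_def by (simp add: psi_add)
  also have "\<dots> = (\<Sum>x\<in>UNIV. \<Sum>a\<in>K - {0}. psi (x powi d) * psi (a * x))" by (rule sum.swap)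
  also have "\<dots> = (\<Sum>x\<in>UNIV. psi (x powi d) * (S K x - 1))"
  proof (rule sum.cong[OF refl])
    fix x :: 'a
    have "(\<Sum>a\<in>K - {0}. psi (a * x)) = S K x - psi (0 * x)"
      unfolding S_def[OF K C] using K0 by (simp add: sum_diff1)
    thus "(\<Sum>a\<in>K - {0}. psi (x powi d) * psi (a * x)) = psi (x powi d) * (S K x - 1)"
      by (simp add: sum_distrib_left[symmetric] psi_zero)
  qed
  also have "\<dots> = (\<Sum>x\<in>UNIV. psi (x powi d) * S K x) - (\<Sum>x\<in>UNIV. psi ((x::'a) powi d))"
    by (simp add: right_diff_distrib sum_subtractf)
  also have "(\<Sum>x\<in>UNIV. psi ((x::'a) powi d)) = 0" by (rule sum_psi_powi)
  also have "(\<Sum>x\<in>UNIV. psi (x powi d) * S K x) = (\<Sum>x\<in>UNIV. if x \<in> T K then of_nat (card K) else 0)"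
  proof (rule sum.cong[OF refl])
    fix x :: 'a
    show "psi (x powi d) * S K x = (if x \<in> T K then of_nat (card K) else 0)"
    proof (cases "x \<in> T K")
      case True
      have "x powi d \<in> T K" by (rule T_powi[OF True])
      hence "abs_trace (x powi d) = 0" using trace_T[OF K C] unfolding T_def[OF K C] by simp
      hence "psi (x powi d) = 1" using psi_one by blast
      thus ?thesis using S_T[OF K C True] True by simp
    next
      case False thus ?thesis using S_notT[OF K C False] by simp
    qed
  qed
  also have "\<dots> = of_nat (card K) * of_nat (card (T K))"
    by (simp add: sum.If_cases Int_def)
  also have "\<dots> = of_nat CARD('a)" using card_T[OF K C] C by (simp add: power2_eq_square)
  finally show ?thesis by simp
qed

end

theorem lemma2p5:
  fixes K :: "'a::{field,finite} set" and d :: int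
  assumes "is_subfield K"
    and "CARD('a) = card K ^ 2"
    and "gcd d (int CARD('a) - 1) = 1"
  shows "(\<Sum>a\<in>K - {0}. W d a) = of_nat CARD('a)"
  by (rule final[OF assms])


end
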